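(* In symmetric private information retrieval with $N=2$ databases and $K=3$ messages of length $L$, when the upload cost is $U=2\log_2 4=4$, the optimal (minimum achievable) download cost is $D=2L$, and the minimal amount of required common randomness is $H(\mathcal{R})=L$.
   Context: SPIR setting: each of $N$ non-colluding databases stores the same $K$ i.i.d. messages $W_1,\dots,W_K$, each consisting of $L$ i.i.d. uniform symbols from a sufficiently large finite field $\mathbb{F}_q$ (entropies in $q$-ary units, $H(W_k)=L$, $H(W_{1:K})=KL$). The user wants $W_k$, $k\in[K]$, with private randomness $\mathcal{F}$; the databases share common randomness $\mathcal{R}$, and $I(W_{1:K};k,\mathcal{F},\mathcal{R})=0$. Queries $Q_n^{[k]}$ are deterministic functions of $\mathcal{F}$; answers satisfy $H(A_n^{[k]}\mid Q_n^{[k]},W_{1:K},\mathcal{R})=0$. Achievability requires reliability $H(W_k\mid\mathcal{F},A_{1:N}^{[k]})=0$; user privacy: for all $n$ and $k'\neq k$, $(Q_n^{[k]},A_n^{[k]},W_{1:K},\mathcal{R})\sim(Q_n^{[k']},A_n^{[k']},W_{1:K},\mathcal{R})$; database privacy $I(W_{\bar k};\mathcal{F},A_{1:N}^{[k]})=0$ with $W_{\bar k}=\{W_j:j\neq k\}$. Upload cost $U$: total number of bits sent from user to databases ($U=4$ when each of the two queries takes one of 4 values). Download cost $D$: total size of the answers (in the same units as $L$). Common randomness amount: $H(\mathcal{R})$. *)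

theory Defs
  imports "HOL-Probability.Probability_Mass_Function" "HOL-Library.FuncSet"
begin

(* Messages are indexed 0..K-1 (paper: 1..K), symbols 0..L-1.
   A message tuple W_{1:K} is an (extensional) array  W :: nat => nat => 'a
   with W k l the l-th symbol of message k.
   Sample point omega = (W, F, R): messages, user randomness, common randomness. *)

definition msgs :: "nat \<Rightarrow> nat \<Rightarrow> (nat \<Rightarrow> nat \<Rightarrow> 'a) set" where
  "msgs K L = Pi\<^sub>E {..<K} (\<lambda>_. Pi\<^sub>E {..<L} (\<lambda>_. (UNIV :: 'a set)))"

definition pmf_entropy :: "real \<Rightarrow> 'x pmf \<Rightarrow> real" where
  "pmf_entropy b p = - (\<Sum>x\<in>set_pmf p. pmf p x * log b (pmf p x))"

definition ent :: "real \<Rightarrow> 'w pmf \<Rightarrow> ('w \<Rightarrow> 'x) \<Rightarrow> real" where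
  "ent b M X = pmf_entropy b (map_pmf X M)"

definition cond_ent :: "real \<Rightarrow> 'w pmf \<Rightarrow> ('w \<Rightarrow> 'x) \<Rightarrow> ('w \<Rightarrow> 'y) \<Rightarrow> real" where
  "cond_ent b M X Y = ent b M (\<lambda>w. (X w, Y w)) - ent b M Y"

definition mutual_info :: "real \<Rightarrow> 'w pmf \<Rightarrow> ('w \<Rightarrow> 'x) \<Rightarrow> ('w \<Rightarrow> 'y) \<Rightarrow> real" where
  "mutual_info b M X Y = ent b M X + ent b M Y - ent b M (\<lambda>w. (X w, Y w))"

definition spir_space :: "nat \<Rightarrow> nat \<Rightarrow> 'f pmf \<Rightarrow> 'r pmf
    \<Rightarrow> ((nat \<Rightarrow> nat \<Rightarrow> 'a::finite) \<times> 'f \<times> 'r) pmf" where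
  "spir_space K L pF pR = pair_pmf (pmf_of_set (msgs K L)) (pair_pmf pF pR)"

definition query :: "(nat \<Rightarrow> nat \<Rightarrow> 'f \<Rightarrow> 'q) \<Rightarrow> nat \<Rightarrow> nat \<Rightarrow> 'w \<times> 'f \<times> 'r \<Rightarrow> 'q" where
  "query qry n k \<omega> = qry n k (fst (snd \<omega>))"

definition answer :: "(nat \<Rightarrow> nat \<Rightarrow> 'f \<Rightarrow> 'q) \<Rightarrow> (nat \<Rightarrow> 'q \<Rightarrow> 'w \<Rightarrow> 'r \<Rightarrow> 'b)
    \<Rightarrow> nat \<Rightarrow> nat \<Rightarrow> 'w \<times> 'f \<times> 'r \<Rightarrow> 'b" where
  "answer qry ans n k \<omega> = ans n (query qry n k \<omega>) (fst \<omega>) (snd (snd \<omega>))"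

definition answers :: "nat \<Rightarrow> (nat \<Rightarrow> nat \<Rightarrow> 'f \<Rightarrow> 'q) \<Rightarrow> (nat \<Rightarrow> 'q \<Rightarrow> 'w \<Rightarrow> 'r \<Rightarrow> 'b)
    \<Rightarrow> nat \<Rightarrow> 'w \<times> 'f \<times> 'r \<Rightarrow> 'b list" where
  "answers N qry ans k \<omega> = map (\<lambda>n. answer qry ans n k \<omega>) [0..<N]"

definition other_msgs :: "nat \<Rightarrow> nat \<Rightarrow> (nat \<Rightarrow> 'm) \<Rightarrow> 'm list" where
  "other_msgs K k W = map W (filter (\<lambda>j. j \<noteq> k) [0..<K])"

(* Achievable SPIR scheme with N databases, K messages of length L over F_q,
   entropies in q-ary units (q = CARD('a)). *)
definition spir_scheme :: "nat \<Rightarrow> nat \<Rightarrow> nat \<Rightarrow> 'f pmf \<Rightarrow> 'r pmf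
    \<Rightarrow> (nat \<Rightarrow> nat \<Rightarrow> 'f \<Rightarrow> 'q)
    \<Rightarrow> (nat \<Rightarrow> 'q \<Rightarrow> (nat \<Rightarrow> nat \<Rightarrow> 'a::{finite,field}) \<Rightarrow> 'r \<Rightarrow> 'b) \<Rightarrow> bool" where
  "spir_scheme N K L pF pR qry ans \<longleftrightarrow>
     (let M = (spir_space K L pF pR :: ((nat \<Rightarrow> nat \<Rightarrow> 'a) \<times> 'f \<times> 'r) pmf);
          b = real CARD('a) in
      finite (set_pmf pF) \<and> finite (set_pmf pR) \<and>
      (\<forall>k<K. cond_ent b M (\<lambda>\<omega>. fst \<omega> k)
                 (\<lambda>\<omega>. (fst (snd \<omega>), answers N qry ans k \<omega>)) = 0) \<and>
      (\<forall>n<N. \<forall>k<K. \<forall>k'<K.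
         map_pmf (\<lambda>\<omega>. (query qry n k \<omega>, answer qry ans n k \<omega>, fst \<omega>, snd (snd \<omega>))) M =
         map_pmf (\<lambda>\<omega>. (query qry n k' \<omega>, answer qry ans n k' \<omega>, fst \<omega>, snd (snd \<omega>))) M) \<and>
      (\<forall>k<K. mutual_info b M (\<lambda>\<omega>. other_msgs K k (fst \<omega>))
                 (\<lambda>\<omega>. (fst (snd \<omega>), answers N qry ans k \<omega>)) = 0))"

definition upload_cost :: "nat \<Rightarrow> nat \<Rightarrow> 'f pmf \<Rightarrow> (nat \<Rightarrow> nat \<Rightarrow> 'f \<Rightarrow> 'q) \<Rightarrow> real" where
  "upload_cost N K pF qry =
     (\<Sum>n<N. log 2 (real (card {qry n k f | k f. k < K \<and> f \<in> set_pmf pF})))"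

definition download_cost :: "nat \<Rightarrow> nat \<Rightarrow> nat \<Rightarrow> 'f pmf \<Rightarrow> 'r pmf
    \<Rightarrow> (nat \<Rightarrow> nat \<Rightarrow> 'f \<Rightarrow> 'q)
    \<Rightarrow> (nat \<Rightarrow> 'q \<Rightarrow> (nat \<Rightarrow> nat \<Rightarrow> 'a::{finite,field}) \<Rightarrow> 'r \<Rightarrow> 'b) \<Rightarrow> real" where
  "download_cost N K L pF pR qry ans =
     (\<Sum>n<N. log (real CARD('a))
        (real (card {answer qry ans n k \<omega> | k \<omega>. k < K \<and>
            \<omega> \<in> set_pmf (spir_space K L pF pR :: ((nat \<Rightarrow> nat \<Rightarrow> 'a) \<times> 'f \<times> 'r) pmf)})))"

end

theory Submission
  imports Defs "HOL-Probability.Information"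
begin


definition Pv :: "'w pmf \<Rightarrow> ('w \<Rightarrow> 'x) \<Rightarrow> 'w \<Rightarrow> real" where
  "Pv M X \<omega> = measure_pmf.prob M (X -` {X \<omega>})"

lemma group_sum:
  assumes fin: "finite (set_pmf M)"
  shows "(\<Sum>x\<in>X ` set_pmf M. measure_pmf.prob M (X -` {x}) * g x)
       = (\<Sum>\<omega>\<in>set_pmf M. pmf M \<omega> * g (X \<omega>))"
proof -
  have "(\<Sum>\<omega>\<in>set_pmf M. pmf M \<omega> * g (X \<omega>))
      = (\<Sum>x\<in>X ` set_pmf M. \<Sum>\<omega>\<in>{\<omega>\<in>set_pmf M. X \<omega> = x}. pmf M \<omega> * g (X \<omega>))"
    using fin by (rule sum.image_gen)
  also have "\<dots> = (\<Sum>x\<in>X ` set_pmf M. measure_pmf.prob M (X -` {x}) * g x)"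
  proof (rule sum.cong[OF refl])
    fix x assume "x \<in> X ` set_pmf M"
    have "(\<Sum>\<omega>\<in>{\<omega>\<in>set_pmf M. X \<omega> = x}. pmf M \<omega> * g (X \<omega>))
        = (\<Sum>\<omega>\<in>{\<omega>\<in>set_pmf M. X \<omega> = x}. pmf M \<omega>) * g x"
      by (simp add: sum_distrib_right)
    also have "(\<Sum>\<omega>\<in>{\<omega>\<in>set_pmf M. X \<omega> = x}. pmf M \<omega>) = measure_pmf.prob M (X -` {x})"
    proof -
      have "measure_pmf.prob M (X -` {x}) = measure_pmf.prob M (X -` {x} \<inter> set_pmf M)"
        by (simp add: measure_Int_set_pmf)
      also have "\<dots> = sum (pmf M) (X -` {x} \<inter> set_pmf M)"
        using fin by (simp add: measure_measure_pmf_finite)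
      also have "X -` {x} \<inter> set_pmf M = {\<omega>\<in>set_pmf M. X \<omega> = x}" by auto
      finally show ?thesis by simp
    qed
    finally show "(\<Sum>\<omega>\<in>{\<omega>\<in>set_pmf M. X \<omega> = x}. pmf M \<omega> * g (X \<omega>))
        = measure_pmf.prob M (X -` {x}) * g x" .
  qed
  finally show ?thesis by simp
qed

lemma ent_omega:
  assumes fin: "finite (set_pmf M)"
  shows "ent b M X = - (\<Sum>\<omega>\<in>set_pmf M. pmf M \<omega> * log b (Pv M X \<omega>))"
proof -
  have "ent b M X = - (\<Sum>x\<in>X ` set_pmf M. measure_pmf.prob M (X -` {x}) * log b (measure_pmf.prob M (X -` {x})))"
    by (simp add: ent_def pmf_entropy_def pmf_map)
  also have "\<dots> = - (\<Sum>\<omega>\<in>set_pmf M. pmf M \<omega> * log b (Pv M X \<omega>))"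
    using group_sum[OF fin, of X "\<lambda>x. log b (measure_pmf.prob M (X -` {x}))"]
    by (simp add: Pv_def)
  finally show ?thesis .
qed

lemma Pv_pos:
  assumes "\<omega> \<in> set_pmf M" shows "0 < Pv M X \<omega>"
proof -
  have "0 < pmf M \<omega>" using assms by (simp add: pmf_positive)
  also have "pmf M \<omega> = measure_pmf.prob M {\<omega>}" by (simp add: measure_pmf_single)
  also have "\<dots> \<le> Pv M X \<omega>" unfolding Pv_def
    by (rule measure_pmf.finite_measure_mono) auto
  finally show ?thesis .
qed

lemma Pv_le:
  assumes "\<omega> \<in> set_pmf M" and det: "\<And>\<omega>'. \<omega>' \<in> set_pmf M \<Longrightarrow> Y \<omega>' = Y \<omega> \<Longrightarrow> X \<omega>' = X \<omega>"
  shows "Pv M Y \<omega> \<le> Pv M X \<omega>"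
proof -
  have "Pv M Y \<omega> = measure_pmf.prob M (Y -` {Y \<omega>} \<inter> set_pmf M)"
    by (simp add: Pv_def measure_Int_set_pmf)
  also have "\<dots> \<le> measure_pmf.prob M (X -` {X \<omega>})"
    by (rule measure_pmf.finite_measure_mono) (auto dest: det)
  finally show ?thesis by (simp add: Pv_def)
qed

lemma ent_det_le:
  assumes fin: "finite (set_pmf M)" and b: "1 < b"
    and det: "\<And>\<omega> \<omega>'. \<omega> \<in> set_pmf M \<Longrightarrow> \<omega>' \<in> set_pmf M \<Longrightarrow> Y \<omega>' = Y \<omega> \<Longrightarrow> X \<omega>' = X \<omega>"
  shows "ent b M X \<le> ent b M Y"
proof -
  have "(\<Sum>\<omega>\<in>set_pmf M. pmf M \<omega> * log b (Pv M Y \<omega>)) \<le> (\<Sum>\<omega>\<in>set_pmf M. pmf M \<omega> * log b (Pv M X \<omega>))"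
  proof (rule sum_mono)
    fix \<omega> assume w: "\<omega> \<in> set_pmf M"
    have le: "Pv M Y \<omega> \<le> Pv M X \<omega>" using w by (rule Pv_le) (blast intro: det[OF w])
    have "log b (Pv M Y \<omega>) \<le> log b (Pv M X \<omega>)"
      using le Pv_pos[OF w, of Y] b by simp
    then show "pmf M \<omega> * log b (Pv M Y \<omega>) \<le> pmf M \<omega> * log b (Pv M X \<omega>)"
      by (simp add: mult_left_mono)
  qed
  then show ?thesis by (simp add: ent_omega[OF fin])
qed

lemma ent_det_eq:
  assumes fin: "finite (set_pmf M)" and b: "1 < b"
    and det: "\<And>\<omega> \<omega>'. \<omega> \<in> set_pmf M \<Longrightarrow> \<omega>' \<in> set_pmf M \<Longrightarrow> Y \<omega>' = Y \<omega> \<longleftrightarrow> X \<omega>' = X \<omega>"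
  shows "ent b M X = ent b M Y"
  using ent_det_le[OF fin b, of Y X] ent_det_le[OF fin b, of X Y] det by force

lemma ent_nonneg:
  assumes fin: "finite (set_pmf M)" and b: "1 < b"
  shows "0 \<le> ent b M X"
proof -
  have "pmf M \<omega> * log b (Pv M X \<omega>) \<le> 0" if "\<omega> \<in> set_pmf M" for \<omega>
  proof -
    have "Pv M X \<omega> \<le> 1" by (simp add: Pv_def)
    then have "log b (Pv M X \<omega>) \<le> 0" using Pv_pos[OF that, of X] b by simp
    then show ?thesis by (simp add: mult_nonneg_nonpos)
  qed
  then have "(\<Sum>\<omega>\<in>set_pmf M. pmf M \<omega> * log b (Pv M X \<omega>)) \<le> 0" by (intro sum_nonpos) auto
  then show ?thesis by (simp add: ent_omega[OF fin])
qed

lemma ent_submod: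
  assumes fin: "finite (set_pmf M)" and b: "1 < b"
  shows "ent b M (\<lambda>\<omega>. (X \<omega>, Y \<omega>, Z \<omega>)) + ent b M Z
       \<le> ent b M (\<lambda>\<omega>. (X \<omega>, Z \<omega>)) + ent b M (\<lambda>\<omega>. (Y \<omega>, Z \<omega>))"
proof -
  define N where "N = restrict_space (measure_pmf M) (set_pmf M)"
  have ps: "prob_space N" unfolding N_def
    by (rule prob_space_restrict_space) (auto simp: emeasure_pmf)
  interpret N: information_space N b using ps b by (simp add: information_space_def information_space_axioms_def)
  have space: "space N = set_pmf M" by (simp add: N_def space_restrict_space)
  have sets: "A \<in> sets N" if "A \<subseteq> set_pmf M" for A
  proof -
    have "A = set_pmf M \<inter> A" using that by auto
    then show ?thesis unfolding N_def sets_restrict_space by auto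
  qed
  have sf: "simple_function N V" for V :: "_ \<Rightarrow> 'z"
    unfolding simple_function_def space using fin by (auto intro!: sets simp: space)
  have meas: "measure N (V -` {v} \<inter> space N) = measure_pmf.prob M (V -` {v})" for V :: "_ \<Rightarrow> 'z" and v
  proof -
    have "measure N (V -` {v} \<inter> space N) = measure_pmf.prob M (V -` {v} \<inter> set_pmf M)"
      unfolding N_def space_restrict_space space_measure_pmf Int_UNIV_right by (rule measure_restrict_space) auto
    then show ?thesis by (simp add: measure_Int_set_pmf)
  qed
  have sd: "simple_distributed N V (\<lambda>v. measure N (V -` {v} \<inter> space N))" for V :: "_ \<Rightarrow> 'z"
    by (rule N.simple_distributedI[OF sf _ refl]) (simp add: measure_nonneg)
  have nn: "0 \<le> N.conditional_mutual_information b (count_space (X ` space N)) (count_space (Y ` space N)) (count_space (Z ` space N)) X Y Z"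
    by (rule N.conditional_mutual_information_nonneg[OF sf sf sf])
  note eq = N.conditional_mutual_information_eq[OF sd sd sd sd]
  let ?XYZ = "\<lambda>x. (X x, Y x, Z x)" and ?XZ = "\<lambda>x. (X x, Z x)" and ?YZ = "\<lambda>x. (Y x, Z x)"
  let ?P = "\<lambda>V v. measure_pmf.prob M (V -` {v})"
  define G where "G t = (case t of (x,y,z) \<Rightarrow>
     log b (?P ?XYZ (x,y,z) * ?P Z z / (?P ?XZ (x,z) * ?P ?YZ (y,z))))" for t
  have "0 \<le> N.conditional_mutual_information b (count_space (X ` space N)) (count_space (Y ` space N)) (count_space (Z ` space N)) X Y Z" by (fact nn)
  also have "\<dots> = (\<Sum>t\<in>?XYZ ` set_pmf M. ?P ?XYZ t * G t)"
    by (simp only: eq) (auto simp: space meas[unfolded space] G_def split: prod.split intro!: sum.cong)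
  also have "\<dots> = (\<Sum>\<omega>\<in>set_pmf M. pmf M \<omega> * G (?XYZ \<omega>))"
    by (rule group_sum[OF fin])
  also have "\<dots> = (\<Sum>\<omega>\<in>set_pmf M. pmf M \<omega> * (log b (Pv M ?XYZ \<omega>) + log b (Pv M Z \<omega>)
        - log b (Pv M ?XZ \<omega>) - log b (Pv M ?YZ \<omega>)))"
  proof (rule sum.cong[OF refl])
    fix \<omega> assume w: "\<omega> \<in> set_pmf M"
    note p = Pv_pos[OF w]
    have "G (?XYZ \<omega>) = log b (Pv M ?XYZ \<omega> * Pv M Z \<omega> / (Pv M ?XZ \<omega> * Pv M ?YZ \<omega>))"
      by (simp add: G_def Pv_def)
    also have "\<dots> = log b (Pv M ?XYZ \<omega>) + log b (Pv M Z \<omega>) - log b (Pv M ?XZ \<omega>) - log b (Pv M ?YZ \<omega>)"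
      using p[of ?XYZ] p[of Z] p[of ?XZ] p[of ?YZ] b
      by (simp add: log_mult log_divide)
    finally show "pmf M \<omega> * G (?XYZ \<omega>) = pmf M \<omega> * (log b (Pv M ?XYZ \<omega>) + log b (Pv M Z \<omega>)
        - log b (Pv M ?XZ \<omega>) - log b (Pv M ?YZ \<omega>))" by simp
  qed
  also have "\<dots> = ent b M ?XZ + ent b M ?YZ - ent b M ?XYZ - ent b M Z"
    by (simp add: ent_omega[OF fin] algebra_simps sum.distrib sum_subtractf)
  finally show ?thesis by simp
qed

lemma ent_le_card:
  assumes fin: "finite (set_pmf M)" and b: "1 < b"
  shows "ent b M X \<le> log b (real (card (X ` set_pmf M)))"
proof -
  define N where "N = restrict_space (measure_pmf M) (set_pmf M)"
  have ps: "prob_space N" unfolding N_def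
    by (rule prob_space_restrict_space) (auto simp: emeasure_pmf)
  interpret N: information_space N b using ps b by (simp add: information_space_def information_space_axioms_def)
  have space: "space N = set_pmf M" by (simp add: N_def space_restrict_space)
  have sets: "A \<in> sets N" if "A \<subseteq> set_pmf M" for A
  proof -
    have "A = set_pmf M \<inter> A" using that by auto
    then show ?thesis unfolding N_def sets_restrict_space by auto
  qed
  have sf: "simple_function N V" for V :: "_ \<Rightarrow> 'z"
    unfolding simple_function_def space using fin by (auto intro!: sets simp: space)
  have meas: "measure N (V -` {v} \<inter> set_pmf M) = measure_pmf.prob M (V -` {v})" for V :: "_ \<Rightarrow> 'z" and v
  proof -
    have "measure N (V -` {v} \<inter> set_pmf M) = measure_pmf.prob M (V -` {v} \<inter> set_pmf M)"
      unfolding N_def by (rule measure_restrict_space) auto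
    then show ?thesis by (simp add: measure_Int_set_pmf)
  qed
  have sd: "simple_distributed N V (\<lambda>v. measure N (V -` {v} \<inter> space N))" for V :: "_ \<Rightarrow> 'z"
    by (rule N.simple_distributedI[OF sf _ refl]) (simp add: measure_nonneg)
  have e: "N.entropy b (count_space (X ` space N)) X = - (\<Sum>x\<in>X`space N. measure N (X -` {x} \<inter> space N) * log b (measure N (X -` {x} \<inter> space N)))"
    by (rule N.entropy_simple_distributed[OF sd])
  have "ent b M X = N.entropy b (count_space (X ` space N)) X"
    unfolding e by (simp add: ent_def pmf_entropy_def pmf_map space meas)
  also have "\<dots> \<le> log b (real (card (X ` space N)))" by (rule N.entropy_le_card[OF sd])
  finally show ?thesis by (simp add: space)
qed

lemma ent_map: "ent b M (\<lambda>\<omega>. \<phi> (V \<omega>)) = pmf_entropy b (map_pmf \<phi> (map_pmf V M))"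
  by (simp add: ent_def map_pmf_comp)

lemma pmf_entropy_pair:
  assumes "finite (set_pmf p)" "finite (set_pmf q)"
  shows "pmf_entropy b (pair_pmf p q) = pmf_entropy b p + pmf_entropy b q"
proof -
  have "(\<Sum>z\<in>set_pmf p \<times> set_pmf q. pmf (pair_pmf p q) z * log b (pmf (pair_pmf p q) z))
      = (\<Sum>x\<in>set_pmf p. \<Sum>y\<in>set_pmf q. pmf p x * pmf q y * (log b (pmf p x) + log b (pmf q y)))"
    by (simp add: sum.cartesian_product) (auto intro!: sum.cong simp: pmf_pair log_mult pmf_positive)
  also have "\<dots> = (\<Sum>x\<in>set_pmf p. pmf p x * log b (pmf p x) * (\<Sum>y\<in>set_pmf q. pmf q y))
      + (\<Sum>x\<in>set_pmf p. pmf p x) * (\<Sum>y\<in>set_pmf q. pmf q y * log b (pmf q y))"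
    by (simp add: algebra_simps sum.distrib sum_distrib_left sum_distrib_right sum.swap[of _ "set_pmf q"])
  also have "\<dots> = (\<Sum>x\<in>set_pmf p. pmf p x * log b (pmf p x)) + (\<Sum>y\<in>set_pmf q. pmf q y * log b (pmf q y))"
    using assms by (simp add: sum_pmf_eq_1)
  finally show ?thesis by (simp add: pmf_entropy_def)
qed

lemma pmf_entropy_uniform:
  assumes "finite A" "A \<noteq> {}"
  shows "pmf_entropy b (pmf_of_set A) = log b (real (card A))"
proof -
  have c: "0 < card A" using assms by (simp add: card_gt_0_iff)
  have "pmf_entropy b (pmf_of_set A) = - (\<Sum>x\<in>A. (1 / card A) * log b (1 / card A))"
    using assms by (simp add: pmf_entropy_def)
  also have "\<dots> = - log b (1 / card A)" using c by simp
  also have "\<dots> = log b (card A)" using c by (simp add: log_divide)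
  finally show ?thesis .
qed




lemma ent_subadd:
  assumes fin: "finite (set_pmf M)" and b: "1 < b"
  shows "ent b M (\<lambda>\<omega>. (X \<omega>, Y \<omega>)) \<le> ent b M X + ent b M Y"
proof -
  have s: "ent b M (\<lambda>\<omega>. (X \<omega>, Y \<omega>, ())) + ent b M (\<lambda>\<omega>. ())
       \<le> ent b M (\<lambda>\<omega>. (X \<omega>, ())) + ent b M (\<lambda>\<omega>. (Y \<omega>, ()))" by (rule ent_submod[OF fin b])
  have "ent b M (\<lambda>\<omega>. (X \<omega>, Y \<omega>, ())) = ent b M (\<lambda>\<omega>. (X \<omega>, Y \<omega>))" by (rule ent_det_eq[OF fin b]) auto
  moreover have "ent b M (\<lambda>\<omega>. (X \<omega>, ())) = ent b M X" by (rule ent_det_eq[OF fin b]) auto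
  moreover have "ent b M (\<lambda>\<omega>. (Y \<omega>, ())) = ent b M Y" by (rule ent_det_eq[OF fin b]) auto
  moreover have "0 \<le> ent b M (\<lambda>\<omega>. ())" by (rule ent_nonneg[OF fin b])
  ultimately show ?thesis using s by linarith
qed

lemma mi_mono:
  assumes fin: "finite (set_pmf M)" and b: "1 < b"
    and dx: "\<And>\<omega> \<omega>'. \<omega> \<in> set_pmf M \<Longrightarrow> \<omega>' \<in> set_pmf M \<Longrightarrow> X \<omega>' = X \<omega> \<Longrightarrow> X' \<omega>' = X' \<omega>"
    and dy: "\<And>\<omega> \<omega>'. \<omega> \<in> set_pmf M \<Longrightarrow> \<omega>' \<in> set_pmf M \<Longrightarrow> Y \<omega>' = Y \<omega> \<Longrightarrow> Y' \<omega>' = Y' \<omega>"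
  shows "ent b M X' + ent b M Y' - ent b M (\<lambda>\<omega>. (X' \<omega>, Y' \<omega>))
       \<le> ent b M X + ent b M Y - ent b M (\<lambda>\<omega>. (X \<omega>, Y \<omega>))"
proof -
  have s1: "ent b M (\<lambda>\<omega>. (X \<omega>, Y \<omega>, Y' \<omega>)) + ent b M Y'
       \<le> ent b M (\<lambda>\<omega>. (X \<omega>, Y' \<omega>)) + ent b M (\<lambda>\<omega>. (Y \<omega>, Y' \<omega>))" by (rule ent_submod[OF fin b])
  have s2: "ent b M (\<lambda>\<omega>. (Y' \<omega>, X \<omega>, X' \<omega>)) + ent b M X'
       \<le> ent b M (\<lambda>\<omega>. (Y' \<omega>, X' \<omega>)) + ent b M (\<lambda>\<omega>. (X \<omega>, X' \<omega>))" by (rule ent_submod[OF fin b])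
  have e1: "ent b M (\<lambda>\<omega>. (X \<omega>, Y \<omega>, Y' \<omega>)) = ent b M (\<lambda>\<omega>. (X \<omega>, Y \<omega>))"
    by (rule ent_det_eq[OF fin b]) (auto dest: dy)
  have e2: "ent b M (\<lambda>\<omega>. (Y \<omega>, Y' \<omega>)) = ent b M Y"
    by (rule ent_det_eq[OF fin b]) (auto dest: dy)
  have e3: "ent b M (\<lambda>\<omega>. (Y' \<omega>, X \<omega>, X' \<omega>)) = ent b M (\<lambda>\<omega>. (X \<omega>, Y' \<omega>))"
    by (rule ent_det_eq[OF fin b]) (auto dest: dx)
  have e4: "ent b M (\<lambda>\<omega>. (Y' \<omega>, X' \<omega>)) = ent b M (\<lambda>\<omega>. (X' \<omega>, Y' \<omega>))"
    by (rule ent_det_eq[OF fin b]) auto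
  have e5: "ent b M (\<lambda>\<omega>. (X \<omega>, X' \<omega>)) = ent b M X"
    by (rule ent_det_eq[OF fin b]) (auto dest: dx)
  show ?thesis using s1 s2 e1 e2 e3 e4 e5 by linarith
qed

lemma msgs_fin: "finite (msgs K L :: (nat \<Rightarrow> nat \<Rightarrow> 'a::finite) set)"
  unfolding msgs_def by (intro finite_PiE) auto

lemma msgs_ne: "(msgs K L :: (nat \<Rightarrow> nat \<Rightarrow> 'a) set) \<noteq> {}"
  unfolding msgs_def by (simp add: PiE_eq_empty_iff)

lemma inner_card: "card (Pi\<^sub>E {..<L} (\<lambda>_. (UNIV :: 'a::finite set))) = CARD('a) ^ L"
  by (simp add: card_PiE)

lemma msgs_card: "card (msgs K L :: (nat \<Rightarrow> nat \<Rightarrow> 'a::finite) set) = CARD('a) ^ (K * L)"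
  unfolding msgs_def by (simp add: card_PiE inner_card flip: power_mult) (simp add: mult.commute)

lemma set_spir: "finite (set_pmf pF) \<Longrightarrow> finite (set_pmf pR) \<Longrightarrow>
  set_pmf (spir_space K L pF pR :: ((nat \<Rightarrow> nat \<Rightarrow> 'a::finite) \<times> 'f \<times> 'r) pmf)
   = msgs K L \<times> set_pmf pF \<times> set_pmf pR"
  by (simp add: spir_space_def msgs_fin msgs_ne)

lemma fin_spir: "finite (set_pmf pF) \<Longrightarrow> finite (set_pmf pR) \<Longrightarrow>
  finite (set_pmf (spir_space K L pF pR :: ((nat \<Rightarrow> nat \<Rightarrow> 'a::finite) \<times> 'f \<times> 'r) pmf))"
  by (simp add: set_spir msgs_fin)

lemma card_field_gt1: "1 < real CARD('a::{finite,field})"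
proof -
  have "card {0::'a, 1} \<le> CARD('a)" by (rule card_mono) auto
  then show ?thesis by simp
qed

lemma msgs_eq3:
  assumes "W \<in> msgs 3 L" "W' \<in> msgs 3 L"
  shows "W' = W \<longleftrightarrow> W' 0 = W 0 \<and> W' 1 = W 1 \<and> W' 2 = W 2"
proof
  assume h: "W' 0 = W 0 \<and> W' 1 = W 1 \<and> W' 2 = W 2"
  show "W' = W"
  proof
    fix j show "W' j = W j"
    proof (cases "j < 3")
      case True then have "j = 0 \<or> j = 1 \<or> j = 2" by auto
      then show ?thesis using h by auto
    next
      case False then show ?thesis using assms unfolding msgs_def by (auto simp: PiE_def extensional_def)
    qed
  qed
qed simp

lemma spir_indep:
  "map_pmf (\<lambda>\<omega>. (fst (snd \<omega>), (fst \<omega>, snd (snd \<omega>)))) (spir_space K L pF pR :: ((nat \<Rightarrow> nat \<Rightarrow> 'a::finite) \<times> 'f \<times> 'r) pmf)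
    = pair_pmf pF (pair_pmf (pmf_of_set (msgs K L)) pR)"
proof -
  let ?g = "\<lambda>\<omega>::(_ \<times> _ \<times> _). (fst (snd \<omega>), (fst \<omega>, snd (snd \<omega>)))"
  have inj: "inj ?g" by (auto simp: inj_def prod_eq_iff)
  show ?thesis
  proof (rule pmf_eqI)
    fix z :: "'f \<times> (nat \<Rightarrow> nat \<Rightarrow> 'a) \<times> 'r"
    obtain f w r where z: "z = ?g (w, f, r)" by (cases z) auto
    show "pmf (map_pmf ?g (spir_space K L pF pR :: ((nat \<Rightarrow> nat \<Rightarrow> 'a::finite) \<times> 'f \<times> 'r) pmf)) z = pmf (pair_pmf pF (pair_pmf (pmf_of_set (msgs K L)) pR)) z"
      unfolding z pmf_map_inj'[OF inj] by (simp add: spir_space_def pmf_pair)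
  qed
qed




lemma answers2: "answers 2 qry ans k \<omega> = [answer qry ans 0 k \<omega>, answer qry ans 1 k \<omega>]"
  by (simp add: answers_def numeral_2_eq_2 upt_rec)

locale sp =
  fixes L :: nat and pF :: "'f pmf" and pR :: "'r pmf" and TY :: "'a::{finite,field} itself"
  assumes finF: "finite (set_pmf pF)" and finR: "finite (set_pmf pR)"
begin

abbreviation MM :: "((nat \<Rightarrow> nat \<Rightarrow> 'a) \<times> 'f \<times> 'r) pmf" where
  "MM \<equiv> spir_space 3 L pF pR"

abbreviation pW :: "(nat \<Rightarrow> nat \<Rightarrow> 'a) pmf" where
  "pW \<equiv> pmf_of_set (msgs 3 L)"

abbreviation H :: "((nat \<Rightarrow> nat \<Rightarrow> 'a) \<times> 'f \<times> 'r \<Rightarrow> 'x) \<Rightarrow> real" where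
  "H V \<equiv> ent (real CARD('a)) MM V"

lemma fin: "finite (set_pmf MM)" by (rule fin_spir[OF finF finR])
lemma b: "1 < real CARD('a)" by (rule card_field_gt1)
lemma setM: "set_pmf MM = msgs 3 L \<times> set_pmf pF \<times> set_pmf pR" by (rule set_spir[OF finF finR])

lemma Heq: "(\<And>\<omega> \<omega>'. \<omega> \<in> set_pmf MM \<Longrightarrow> \<omega>' \<in> set_pmf MM \<Longrightarrow> Y \<omega>' = Y \<omega> \<longleftrightarrow> X \<omega>' = X \<omega>) \<Longrightarrow> H X = H Y"
  by (rule ent_det_eq[OF fin b])

lemma Hle: "(\<And>\<omega> \<omega>'. \<omega> \<in> set_pmf MM \<Longrightarrow> \<omega>' \<in> set_pmf MM \<Longrightarrow> Y \<omega>' = Y \<omega> \<Longrightarrow> X \<omega>' = X \<omega>) \<Longrightarrow> H X \<le> H Y"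
  by (rule ent_det_le[OF fin b])

lemmas submod = ent_submod[OF fin b]
lemmas subadd = ent_subadd[OF fin b]
lemmas nonneg = ent_nonneg[OF fin b]

lemma indep: "H (\<lambda>\<omega>. (fst (snd \<omega>), (fst \<omega>, snd (snd \<omega>)))) = H (\<lambda>\<omega>. fst (snd \<omega>)) + H (\<lambda>\<omega>. (fst \<omega>, snd (snd \<omega>)))"
proof -
  let ?g = "\<lambda>\<omega>::((nat \<Rightarrow> nat \<Rightarrow> 'a) \<times> 'f \<times> 'r). (fst (snd \<omega>), (fst \<omega>, snd (snd \<omega>)))"
  have m: "map_pmf ?g MM = pair_pmf pF (pair_pmf pW pR)" by (rule spir_indep)
  have "H ?g = pmf_entropy (real CARD('a)) (map_pmf ?g MM)" by (simp add: ent_def)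
  also have "\<dots> = pmf_entropy (real CARD('a)) pF + pmf_entropy (real CARD('a)) (pair_pmf pW pR)"
    unfolding m by (rule pmf_entropy_pair) (simp_all add: finF finR msgs_fin msgs_ne)
  moreover have "H (\<lambda>\<omega>. fst (snd \<omega>)) = pmf_entropy (real CARD('a)) pF"
    using ent_map[of "real CARD('a)" MM fst ?g] by (simp add: m map_fst_pair_pmf)
  moreover have "H (\<lambda>\<omega>. (fst \<omega>, snd (snd \<omega>))) = pmf_entropy (real CARD('a)) (pair_pmf pW pR)"
    using ent_map[of "real CARD('a)" MM snd ?g] by (simp add: m map_snd_pair_pmf)
  ultimately show ?thesis by simp
qed

lemma HW: "H (\<lambda>\<omega>. fst \<omega>) = 3 * real L"
proof -
  have "map_pmf fst MM = pmf_of_set (msgs 3 L)" by (simp add: spir_space_def map_fst_pair_pmf)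
  then have "H (\<lambda>\<omega>. fst \<omega>) = pmf_entropy (real CARD('a)) pW" by (simp add: ent_def)
  also have "\<dots> = log (real CARD('a)) (real (card (msgs 3 L :: (nat \<Rightarrow> nat \<Rightarrow> 'a) set)))"
    by (rule pmf_entropy_uniform[OF msgs_fin msgs_ne])
  also have "\<dots> = 3 * real L" using b by (simp add: msgs_card log_nat_power)
  finally show ?thesis .
qed

lemma HWj: assumes j: "j < 3" shows "H (\<lambda>\<omega>. fst \<omega> j) \<le> real L"
proof -
  have "H (\<lambda>\<omega>. fst \<omega> j) \<le> log (real CARD('a)) (real (card ((\<lambda>\<omega>. fst \<omega> j) ` set_pmf MM)))"
    by (rule ent_le_card[OF fin b])
  also have "\<dots> \<le> log (real CARD('a)) (real (card (Pi\<^sub>E {..<L} (\<lambda>_. (UNIV :: 'a set)))))"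
  proof -
    have sub: "(\<lambda>\<omega>. fst \<omega> j) ` set_pmf MM \<subseteq> Pi\<^sub>E {..<L} (\<lambda>_. (UNIV :: 'a set))"
    proof (rule image_subsetI)
      fix \<omega> assume "\<omega> \<in> set_pmf MM"
      then have "fst \<omega> \<in> msgs 3 L" by (auto simp: setM)
      then show "fst \<omega> j \<in> Pi\<^sub>E {..<L} (\<lambda>_. (UNIV :: 'a set))"
        unfolding msgs_def using j by (auto dest: PiE_mem)
    qed
    have ne: "(\<lambda>\<omega>. fst \<omega> j) ` set_pmf MM \<noteq> {}" by (simp add: setM msgs_ne set_pmf_not_empty)
    have "card ((\<lambda>\<omega>. fst \<omega> j) ` set_pmf MM) \<le> card (Pi\<^sub>E {..<L} (\<lambda>_. (UNIV :: 'a set)))"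
      by (rule card_mono[OF _ sub]) (simp add: finite_PiE)
    moreover have "0 < card ((\<lambda>\<omega>. fst \<omega> j) ` set_pmf MM)" using ne fin by (simp add: card_gt_0_iff)
    ultimately show ?thesis using b by simp
  qed
  also have "\<dots> = real L" using b by (simp add: inner_card log_nat_power)
  finally show ?thesis .
qed


lemma other1: "other_msgs 3 1 W = [W 0, W 2]"
  by (simp add: other_msgs_def numeral_3_eq_3 numeral_2_eq_2 upt_rec)
lemma other0: "other_msgs 3 0 W = [W 1, W 2]"
  by (simp add: other_msgs_def numeral_3_eq_3 numeral_2_eq_2 upt_rec)
end

locale conv = sp L pF pR "TYPE('a::{finite,field})" for L :: nat and pF :: "'f pmf" and pR :: "'r pmf" +
  fixes qry :: "nat \<Rightarrow> nat \<Rightarrow> 'f \<Rightarrow> 'q"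
    and ans :: "nat \<Rightarrow> 'q \<Rightarrow> (nat \<Rightarrow> nat \<Rightarrow> 'a::{finite,field}) \<Rightarrow> 'r \<Rightarrow> 'b"
  assumes sch: "spir_scheme 2 3 L pF pR qry ans"
begin

lemma rel: "\<forall>k<3. cond_ent (real CARD('a)) MM (\<lambda>\<omega>. fst \<omega> k) (\<lambda>\<omega>. (fst (snd \<omega>), answers 2 qry ans k \<omega>)) = 0"
  and upriv: "\<forall>n<2. \<forall>k<3. \<forall>k'<3.
         map_pmf (\<lambda>\<omega>. (query qry n k \<omega>, answer qry ans n k \<omega>, fst \<omega>, snd (snd \<omega>))) MM =
         map_pmf (\<lambda>\<omega>. (query qry n k' \<omega>, answer qry ans n k' \<omega>, fst \<omega>, snd (snd \<omega>))) MM"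
  and dpriv: "\<forall>k<3. mutual_info (real CARD('a)) MM (\<lambda>\<omega>. other_msgs 3 k (fst \<omega>))
                 (\<lambda>\<omega>. (fst (snd \<omega>), answers 2 qry ans k \<omega>)) = 0"
  using sch unfolding spir_scheme_def Let_def by blast+

lemma key:
  assumes n: "n < 2"
  shows "H (\<lambda>\<omega>. (fst \<omega> 0, fst (snd \<omega>))) + H (\<lambda>\<omega>. (answer qry ans n 0 \<omega>, fst (snd \<omega>)))
       \<le> H (\<lambda>\<omega>. (fst \<omega> 0, answer qry ans n 0 \<omega>, fst (snd \<omega>))) + H (\<lambda>\<omega>. fst (snd \<omega>))"
proof -
  let ?U = "\<lambda>\<omega>::((nat \<Rightarrow> nat \<Rightarrow> 'a) \<times> 'f \<times> 'r). fst \<omega> 0"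
  let ?F = "\<lambda>\<omega>::((nat \<Rightarrow> nat \<Rightarrow> 'a) \<times> 'f \<times> 'r). fst (snd \<omega>)"
  let ?A = "answer qry ans n 0" and ?Q = "query qry n 0"
  let ?A' = "answer qry ans n 1" and ?Q' = "query qry n 1"
  let ?WR = "\<lambda>\<omega>::((nat \<Rightarrow> nat \<Rightarrow> 'a) \<times> 'f \<times> 'r). (fst \<omega>, snd (snd \<omega>))"
  note defs = answer_def query_def
  have a1: "H (\<lambda>\<omega>. (?A \<omega>, ?F \<omega>, ?Q \<omega>)) + H ?Q \<le> H (\<lambda>\<omega>. (?A \<omega>, ?Q \<omega>)) + H (\<lambda>\<omega>. (?F \<omega>, ?Q \<omega>))"
    by (rule submod)
  have a2: "H (\<lambda>\<omega>. (?A \<omega>, ?F \<omega>, ?Q \<omega>)) = H (\<lambda>\<omega>. (?A \<omega>, ?F \<omega>))" by (rule Heq) (auto simp: defs)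
  have a3: "H (\<lambda>\<omega>. (?F \<omega>, ?Q \<omega>)) = H ?F" by (rule Heq) (auto simp: defs)
  have b1: "H (\<lambda>\<omega>. (?F \<omega>, ?U \<omega>, ?Q \<omega>)) + H ?Q \<le> H (\<lambda>\<omega>. (?F \<omega>, ?Q \<omega>)) + H (\<lambda>\<omega>. (?U \<omega>, ?Q \<omega>))"
    by (rule submod)
  have b1e: "H (\<lambda>\<omega>. (?F \<omega>, ?U \<omega>, ?Q \<omega>)) = H (\<lambda>\<omega>. (?U \<omega>, ?F \<omega>))" by (rule Heq) (auto simp: defs)
  have b2: "H (\<lambda>\<omega>. (?F \<omega>, ?WR \<omega>, (?A \<omega>, ?U \<omega>, ?Q \<omega>))) + H (\<lambda>\<omega>. (?A \<omega>, ?U \<omega>, ?Q \<omega>))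
      \<le> H (\<lambda>\<omega>. (?F \<omega>, (?A \<omega>, ?U \<omega>, ?Q \<omega>))) + H (\<lambda>\<omega>. (?WR \<omega>, (?A \<omega>, ?U \<omega>, ?Q \<omega>)))"
    by (rule submod)
  have b2a: "H (\<lambda>\<omega>. (?F \<omega>, ?WR \<omega>, (?A \<omega>, ?U \<omega>, ?Q \<omega>))) = H (\<lambda>\<omega>. (?F \<omega>, ?WR \<omega>))"
    by (rule Heq) (auto simp: defs)
  have b2b: "H (\<lambda>\<omega>. (?F \<omega>, (?A \<omega>, ?U \<omega>, ?Q \<omega>))) = H (\<lambda>\<omega>. (?U \<omega>, ?A \<omega>, ?F \<omega>))"
    by (rule Heq) (auto simp: defs)
  have b2c: "H (\<lambda>\<omega>. (?WR \<omega>, (?A \<omega>, ?U \<omega>, ?Q \<omega>))) = H (\<lambda>\<omega>. (?WR \<omega>, ?Q \<omega>))"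
    by (rule Heq) (auto simp: defs)
  have b2d: "H (\<lambda>\<omega>. (?A \<omega>, ?U \<omega>, ?Q \<omega>)) = H (\<lambda>\<omega>. (?U \<omega>, ?A \<omega>, ?Q \<omega>))"
    by (rule Heq) auto
  have b3: "H (\<lambda>\<omega>. (?F \<omega>, ?WR \<omega>)) = H ?F + H ?WR" by (rule indep)
  have b4: "H (\<lambda>\<omega>. (?WR \<omega>, ?Q \<omega>)) \<le> H ?WR + H ?Q" by (rule subadd)
  have br: "H (\<lambda>\<omega>. (?U \<omega>, ?Q \<omega>)) \<le> H ?U + H ?Q" by (rule subadd)
  have pv: "map_pmf (\<lambda>\<omega>. (?Q \<omega>, ?A \<omega>, fst \<omega>, snd (snd \<omega>))) MM
          = map_pmf (\<lambda>\<omega>. (?Q' \<omega>, ?A' \<omega>, fst \<omega>, snd (snd \<omega>))) MM"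
    using upriv n by auto
  have g1: "H (\<lambda>\<omega>. (?A \<omega>, ?Q \<omega>)) = H (\<lambda>\<omega>. (?A' \<omega>, ?Q' \<omega>))"
    using ent_map[of "real CARD('a)" MM "\<lambda>(q,a,w,r). (a,q)" "\<lambda>\<omega>. (?Q \<omega>, ?A \<omega>, fst \<omega>, snd (snd \<omega>))"]
      ent_map[of "real CARD('a)" MM "\<lambda>(q,a,w,r). (a,q)" "\<lambda>\<omega>. (?Q' \<omega>, ?A' \<omega>, fst \<omega>, snd (snd \<omega>))"]
    by (simp add: pv)
  have g2: "H (\<lambda>\<omega>. (?U \<omega>, ?A \<omega>, ?Q \<omega>)) = H (\<lambda>\<omega>. (?U \<omega>, ?A' \<omega>, ?Q' \<omega>))"
    using ent_map[of "real CARD('a)" MM "\<lambda>(q,a,w,r). (w 0, a,q)" "\<lambda>\<omega>. (?Q \<omega>, ?A \<omega>, fst \<omega>, snd (snd \<omega>))"]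
      ent_map[of "real CARD('a)" MM "\<lambda>(q,a,w,r). (w 0, a,q)" "\<lambda>\<omega>. (?Q' \<omega>, ?A' \<omega>, fst \<omega>, snd (snd \<omega>))"]
    by (simp add: pv)
  have dp: "mutual_info (real CARD('a)) MM (\<lambda>\<omega>. other_msgs 3 1 (fst \<omega>))
                 (\<lambda>\<omega>. (fst (snd \<omega>), answers 2 qry ans 1 \<omega>)) = 0"
    using dpriv by simp
  have g3: "H ?U + H (\<lambda>\<omega>. (?A' \<omega>, ?Q' \<omega>)) - H (\<lambda>\<omega>. (?U \<omega>, ?A' \<omega>, ?Q' \<omega>))
     \<le> H (\<lambda>\<omega>. other_msgs 3 1 (fst \<omega>)) + H (\<lambda>\<omega>. (fst (snd \<omega>), answers 2 qry ans 1 \<omega>))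
       - H (\<lambda>\<omega>. (other_msgs 3 1 (fst \<omega>), (fst (snd \<omega>), answers 2 qry ans 1 \<omega>)))"
  proof (rule mi_mono[OF fin b])
    fix \<omega> \<omega>' :: "(nat \<Rightarrow> nat \<Rightarrow> 'a) \<times> 'f \<times> 'r"
    assume h: "other_msgs 3 1 (fst \<omega>') = other_msgs 3 1 (fst \<omega>)"
    show "fst \<omega>' 0 = fst \<omega> 0" using h unfolding other1 by simp
  next
    fix \<omega> \<omega>' :: "(nat \<Rightarrow> nat \<Rightarrow> 'a) \<times> 'f \<times> 'r"
    assume "(fst (snd \<omega>'), answers 2 qry ans 1 \<omega>') = (fst (snd \<omega>), answers 2 qry ans 1 \<omega>)"
    then show "(?A' \<omega>', ?Q' \<omega>') = (?A' \<omega>, ?Q' \<omega>)"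
      using n by (cases n) (auto simp: answers2 query_def)
  qed
  have g4: "H ?U + H (\<lambda>\<omega>. (?A' \<omega>, ?Q' \<omega>)) - H (\<lambda>\<omega>. (?U \<omega>, ?A' \<omega>, ?Q' \<omega>)) \<le> 0"
    using g3 dp by (simp add: mutual_info_def)
  show ?thesis
    using a1 a2 a3 b1 b1e b2 b2a b2b b2c b2d b3 b4 br g1 g2 g4 by linarith
qed


lemma T0: "real L + H (\<lambda>\<omega>. fst (snd \<omega>)) \<le> H (\<lambda>\<omega>. (fst \<omega> 0, fst (snd \<omega>)))"
proof -
  have m: "H (\<lambda>\<omega>. fst \<omega> 0) + H (\<lambda>\<omega>. fst (snd \<omega>)) - H (\<lambda>\<omega>. (fst \<omega> 0, fst (snd \<omega>)))
    \<le> H (\<lambda>\<omega>. (fst \<omega>, snd (snd \<omega>))) + H (\<lambda>\<omega>. fst (snd \<omega>)) - H (\<lambda>\<omega>. ((fst \<omega>, snd (snd \<omega>)), fst (snd \<omega>)))"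
    by (rule mi_mono[OF fin b]) auto
  have e: "H (\<lambda>\<omega>. ((fst \<omega>, snd (snd \<omega>)), fst (snd \<omega>))) = H (\<lambda>\<omega>. (fst (snd \<omega>), (fst \<omega>, snd (snd \<omega>))))"
    by (rule Heq) auto
  have w: "H (\<lambda>\<omega>. fst \<omega>) = H (\<lambda>\<omega>. (fst \<omega> 0, (fst \<omega> 1, fst \<omega> 2)))"
    by (rule Heq) (auto simp: setM msgs_eq3)
  have w1: "H (\<lambda>\<omega>. (fst \<omega> 0, (fst \<omega> 1, fst \<omega> 2))) \<le> H (\<lambda>\<omega>. fst \<omega> 0) + H (\<lambda>\<omega>. (fst \<omega> 1, fst \<omega> 2))"
    by (rule subadd)
  have w2: "H (\<lambda>\<omega>. (fst \<omega> 1, fst \<omega> 2)) \<le> H (\<lambda>\<omega>. fst \<omega> 1) + H (\<lambda>\<omega>. fst \<omega> 2)"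
    by (rule subadd)
  have "H (\<lambda>\<omega>. fst \<omega> 1) \<le> real L" "H (\<lambda>\<omega>. fst \<omega> 2) \<le> real L" by (rule HWj, simp)+
  then show ?thesis using m e indep w w1 w2 HW by linarith
qed

lemma REL: "H (\<lambda>\<omega>. (fst \<omega> 0, answer qry ans 0 0 \<omega>, answer qry ans 1 0 \<omega>, fst (snd \<omega>)))
          = H (\<lambda>\<omega>. (answer qry ans 0 0 \<omega>, answer qry ans 1 0 \<omega>, fst (snd \<omega>)))"
proof -
  have r: "cond_ent (real CARD('a)) MM (\<lambda>\<omega>. fst \<omega> 0) (\<lambda>\<omega>. (fst (snd \<omega>), answers 2 qry ans 0 \<omega>)) = 0"
    using rel by simp
  have e1: "H (\<lambda>\<omega>. (fst \<omega> 0, answer qry ans 0 0 \<omega>, answer qry ans 1 0 \<omega>, fst (snd \<omega>)))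
      = H (\<lambda>\<omega>. (fst \<omega> 0, (fst (snd \<omega>), answers 2 qry ans 0 \<omega>)))"
    by (rule Heq) (auto simp: answers2)
  have e2: "H (\<lambda>\<omega>. (answer qry ans 0 0 \<omega>, answer qry ans 1 0 \<omega>, fst (snd \<omega>)))
      = H (\<lambda>\<omega>. (fst (snd \<omega>), answers 2 qry ans 0 \<omega>))"
    by (rule Heq) (auto simp: answers2)
  show ?thesis using r e1 e2 by (simp add: cond_ent_def)
qed

lemma T2:
  assumes n: "n < 2"
  shows "real L + H (\<lambda>\<omega>. (answer qry ans n 0 \<omega>, fst (snd \<omega>)))
     \<le> H (\<lambda>\<omega>. (answer qry ans 0 0 \<omega>, answer qry ans 1 0 \<omega>, fst (snd \<omega>)))"
proof -
  have l: "H (\<lambda>\<omega>. (fst \<omega> 0, answer qry ans n 0 \<omega>, fst (snd \<omega>)))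
     \<le> H (\<lambda>\<omega>. (fst \<omega> 0, answer qry ans 0 0 \<omega>, answer qry ans 1 0 \<omega>, fst (snd \<omega>)))"
    by (rule Hle) (use n in \<open>auto simp: less_2_cases_iff\<close>)
  show ?thesis using key[OF n] T0 REL l by linarith
qed

lemma goal1:
  assumes m: "m < 2"
  shows "real L \<le> H (answer qry ans m 0)"
proof -
  let ?n = "1 - m"
  have n: "?n < 2" by simp
  have e: "H (\<lambda>\<omega>. (answer qry ans 0 0 \<omega>, answer qry ans 1 0 \<omega>, fst (snd \<omega>)))
     = H (\<lambda>\<omega>. (answer qry ans m 0 \<omega>, (answer qry ans ?n 0 \<omega>, fst (snd \<omega>))))"
    by (rule Heq) (use m in \<open>auto simp: less_2_cases_iff\<close>)
  have s: "H (\<lambda>\<omega>. (answer qry ans m 0 \<omega>, (answer qry ans ?n 0 \<omega>, fst (snd \<omega>))))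
     \<le> H (answer qry ans m 0) + H (\<lambda>\<omega>. (answer qry ans ?n 0 \<omega>, fst (snd \<omega>)))"
    by (rule subadd)
  show ?thesis using T2[OF n] e s by linarith
qed

lemma goal2: "real L \<le> H (\<lambda>\<omega>. snd (snd \<omega>))"
proof -
  let ?A0 = "answer qry ans 0 0" and ?A1 = "answer qry ans 1 0"
  let ?F = "\<lambda>\<omega>::((nat \<Rightarrow> nat \<Rightarrow> 'a) \<times> 'f \<times> 'r). fst (snd \<omega>)"
  have s: "H (\<lambda>\<omega>. (?A0 \<omega>, ?A1 \<omega>, ?F \<omega>)) + H ?F \<le> H (\<lambda>\<omega>. (?A0 \<omega>, ?F \<omega>)) + H (\<lambda>\<omega>. (?A1 \<omega>, ?F \<omega>))"
    by (rule submod)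
  have T1: "2 * real L + H ?F \<le> H (\<lambda>\<omega>. (?A0 \<omega>, ?A1 \<omega>, ?F \<omega>))"
    using s T2[of 0] T2[of 1] by simp
  have c1: "H (\<lambda>\<omega>. ((?A0 \<omega>, ?A1 \<omega>, ?F \<omega>), fst \<omega>)) \<le> H (\<lambda>\<omega>. (snd (snd \<omega>), (?F \<omega>, fst \<omega>)))"
    by (rule Hle) (auto simp: answer_def query_def)
  have c1b: "H (\<lambda>\<omega>. (snd (snd \<omega>), (?F \<omega>, fst \<omega>))) \<le> H (\<lambda>\<omega>. snd (snd \<omega>)) + H (\<lambda>\<omega>. (?F \<omega>, fst \<omega>))"
    by (rule subadd)
  have dp: "mutual_info (real CARD('a)) MM (\<lambda>\<omega>. other_msgs 3 0 (fst \<omega>))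
                 (\<lambda>\<omega>. (fst (snd \<omega>), answers 2 qry ans 0 \<omega>)) = 0"
    using dpriv by simp
  have c2: "H (\<lambda>\<omega>. (other_msgs 3 0 (fst \<omega>), (fst (snd \<omega>), answers 2 qry ans 0 \<omega>)))
       \<le> H (\<lambda>\<omega>. ((?A0 \<omega>, ?A1 \<omega>, ?F \<omega>), fst \<omega>))"
    by (rule Hle) (auto simp: answers2)
  have c2b: "H (\<lambda>\<omega>. (fst (snd \<omega>), answers 2 qry ans 0 \<omega>)) = H (\<lambda>\<omega>. (?A0 \<omega>, ?A1 \<omega>, ?F \<omega>))"
    by (rule Heq) (auto simp: answers2)
  have c3: "H (\<lambda>\<omega>. (?F \<omega>, fst \<omega>)) = H (\<lambda>\<omega>. (fst \<omega> 0, (?F \<omega>, other_msgs 3 0 (fst \<omega>))))"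
    by (rule Heq) (auto simp: setM msgs_eq3 other0)
  have c3b: "H (\<lambda>\<omega>. (fst \<omega> 0, (?F \<omega>, other_msgs 3 0 (fst \<omega>)))) \<le> H (\<lambda>\<omega>. fst \<omega> 0) + H (\<lambda>\<omega>. (?F \<omega>, other_msgs 3 0 (fst \<omega>)))"
    by (rule subadd)
  have c3c: "H (\<lambda>\<omega>. (?F \<omega>, other_msgs 3 0 (fst \<omega>))) \<le> H ?F + H (\<lambda>\<omega>. other_msgs 3 0 (fst \<omega>))"
    by (rule subadd)
  have c4: "H (\<lambda>\<omega>. fst \<omega> 0) \<le> real L" by (rule HWj) simp
  show ?thesis using T1 c1 c1b dp c2 c2b c3 c3b c3c c4 by (simp add: mutual_info_def)
qed


lemma dl_term:
  assumes n: "n < 2"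
  shows "real L \<le> log (real CARD('a)) (real (card {answer qry ans n k \<omega> | k \<omega>. k < 3 \<and> \<omega> \<in> set_pmf MM}))"
proof -
  let ?D = "{answer qry ans n k \<omega> | k \<omega>. k < 3 \<and> \<omega> \<in> set_pmf MM}"
  have D: "?D = (\<lambda>(k, \<omega>). answer qry ans n k \<omega>) ` ({..<3} \<times> set_pmf MM)" by auto
  have finD: "finite ?D" unfolding D using fin by auto
  have sub: "answer qry ans n 0 ` set_pmf MM \<subseteq> ?D"
  proof (rule image_subsetI)
    fix \<omega> assume w: "\<omega> \<in> set_pmf MM"
    show "answer qry ans n 0 \<omega> \<in> ?D"
      by (rule CollectI, rule exI[of _ 0], rule exI[of _ \<omega>]) (simp add: w)
  qed
  have ne: "answer qry ans n 0 ` set_pmf MM \<noteq> {}" by (simp add: set_pmf_not_empty)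
  have c0: "0 < card (answer qry ans n 0 ` set_pmf MM)" using ne fin by (simp add: card_gt_0_iff)
  have c: "card (answer qry ans n 0 ` set_pmf MM) \<le> card ?D" by (rule card_mono[OF finD sub])
  have "real L \<le> H (answer qry ans n 0)" by (rule goal1[OF n])
  also have "\<dots> \<le> log (real CARD('a)) (real (card (answer qry ans n 0 ` set_pmf MM)))"
    by (rule ent_le_card[OF fin b])
  also have "\<dots> \<le> log (real CARD('a)) (real (card ?D))" using c c0 b by simp
  finally show ?thesis .
qed

lemma conv_main: "2 * real L \<le> download_cost 2 3 L pF pR qry ans \<and> real L \<le> pmf_entropy (real CARD('a)) pR"
proof
  show "2 * real L \<le> download_cost 2 3 L pF pR qry ans"
    unfolding download_cost_def using dl_term[of 0] dl_term[of 1] by (simp add: numeral_2_eq_2)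
  have "map_pmf (\<lambda>\<omega>. snd (snd \<omega>)) MM = map_pmf snd (map_pmf snd MM)" by (simp add: map_pmf_comp)
  also have "\<dots> = pR" by (simp add: spir_space_def map_snd_pair_pmf)
  finally have "H (\<lambda>\<omega>. snd (snd \<omega>)) = pmf_entropy (real CARD('a)) pR" by (simp add: ent_def)
  then show "real L \<le> pmf_entropy (real CARD('a)) pR" using goal2 by simp
qed

end

lemma converse:
  fixes pF :: "'f pmf" and pR :: "'r pmf" and qry :: "nat \<Rightarrow> nat \<Rightarrow> 'f \<Rightarrow> 'q"
    and ans :: "nat \<Rightarrow> 'q \<Rightarrow> (nat \<Rightarrow> nat \<Rightarrow> 'a::{finite,field}) \<Rightarrow> 'r \<Rightarrow> 'b"
  assumes "spir_scheme 2 3 L pF pR qry ans"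
  shows "download_cost 2 3 L pF pR qry ans \<ge> 2 * real L \<and> pmf_entropy (real CARD('a)) pR \<ge> real L"
proof -
  have f: "finite (set_pmf pF)" "finite (set_pmf pR)"
    using assms unfolding spir_scheme_def Let_def by blast+
  interpret conv L pF pR qry ans
    by (intro conv.intro sp.intro conv_axioms.intro f assms)
  show ?thesis using conv_main by simp
qed




lemma lists_fin: "finite {xs :: 'a::finite list. length xs = n}"
  using finite_lists_length_eq[of "UNIV :: 'a set" n] by simp
lemma lists_card: "card {xs :: 'a::finite list. length xs = n} = CARD('a) ^ n"
  using card_lists_length_eq[of "UNIV :: 'a set" n] by simp
lemma lists_ne: "{xs :: 'a list. length xs = n} \<noteq> {}"
proof -
  have "replicate n undefined \<in> {xs :: 'a list. length xs = n}" by simp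
  then show ?thesis by blast
qed

lemma oth0: "other_msgs 3 0 W = [W 1, W 2]"
  by (simp add: other_msgs_def numeral_3_eq_3 numeral_2_eq_2 upt_rec)
lemma oth1: "other_msgs 3 1 W = [W 0, W 2]"
  by (simp add: other_msgs_def numeral_3_eq_3 numeral_2_eq_2 upt_rec)
lemma other2: "other_msgs 3 2 W = [W 0, W 1]"
  by (simp add: other_msgs_def numeral_3_eq_3 numeral_2_eq_2 upt_rec)

lemma other_eq:
  assumes k: "k < 3" and W: "W \<in> msgs 3 L" and W': "W' \<in> msgs 3 L"
    and o: "other_msgs 3 k W' = other_msgs 3 k W" and e: "W' k = W k"
  shows "W' = W"
proof -
  have "k = 0 \<or> k = 1 \<or> k = 2" using k by auto
  then have "W' 0 = W 0 \<and> W' 1 = W 1 \<and> W' 2 = W 2"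
  proof (elim disjE)
    assume kk: "k = 0" show ?thesis using o e unfolding kk oth0 by simp
  next
    assume kk: "k = 1" show ?thesis using o e unfolding kk oth1 by simp
  next
    assume kk: "k = 2" show ?thesis using o e unfolding kk other2 by simp
  qed
  then show ?thesis using msgs_eq3[OF W W'] by simp
qed

lemma map_mid:
  "map_pmf (\<lambda>(w, f, r). (w, h f, r)) (pair_pmf A (pair_pmf B C)) = pair_pmf A (pair_pmf (map_pmf h B) C)"
proof -
  have e: "(\<lambda>(w, f, r). (w, h f, r)) = (\<lambda>(a, b). (id a, (\<lambda>(f, r). (h f, id r)) b))" by auto
  show ?thesis unfolding e map_pair using map_pair[of h id B C] by simp
qed

definition pF0 :: "nat pmf" where "pF0 = pmf_of_set {0,1,2,3}"
definition pR0 :: "nat \<Rightarrow> 'a list pmf" where "pR0 L = pmf_of_set {xs. length xs = L}"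
definition tab :: "nat \<Rightarrow> nat \<Rightarrow> nat" where "tab k f = [[0,1,2,3],[1,0,3,2],[2,3,0,1]] ! k ! f"
definition qry0 :: "nat \<Rightarrow> nat \<Rightarrow> nat \<Rightarrow> nat" where "qry0 n k f = (if n = 0 then f else tab k f)"
definition SS :: "nat \<Rightarrow> nat \<Rightarrow> nat set" where
  "SS n q = (if n = 0 then [{}, {0,1}, {0,2}, {1,2}] ! q else [{0},{1},{2},{0,1,2}] ! q)"
definition ans0 :: "nat \<Rightarrow> nat \<Rightarrow> nat \<Rightarrow> (nat \<Rightarrow> nat \<Rightarrow> 'a::field) \<Rightarrow> 'a list \<Rightarrow> 'a list" where
  "ans0 L n q W R = map (\<lambda>l. (\<Sum>j\<in>SS n q. W j l) + R ! l) [0..<L]"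

definition sg :: "nat \<Rightarrow> nat \<Rightarrow> 'a::field" where "sg k f = (if k \<in> SS 0 f then -1 else 1)"

lemma ident:
  fixes W :: "nat \<Rightarrow> nat \<Rightarrow> 'a::field"
  assumes k: "k < 3" and f: "f \<in> {0,1,2,3}"
  shows "(\<Sum>j\<in>SS 1 (qry0 1 k f). W j l) = (\<Sum>j\<in>SS 0 (qry0 0 k f). W j l) + sg k f * W k l"
proof -
  have "k = 0 \<or> k = 1 \<or> k = 2" using k by auto
  then show ?thesis using f by (auto simp: SS_def qry0_def tab_def sg_def algebra_simps)
qed

lemma setF0: "set_pmf pF0 = {0,1,2,3}" by (simp add: pF0_def)
lemma setR0: "set_pmf (pR0 L :: 'a::finite list pmf) = {xs. length xs = L}"
  by (simp add: pR0_def set_pmf_of_set[OF lists_ne lists_fin])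

lemma qry_pres: "k < 3 \<Longrightarrow> map_pmf (qry0 n k) pF0 = pF0"
proof (cases "n = 0")
  case True then show ?thesis by (simp add: qry0_def pmf.map_ident_strong)
next
  case False
  assume k: "k < 3"
  have q: "qry0 n k = tab k" using False by (auto simp: qry0_def)
  have kk: "k = 0 \<or> k = 1 \<or> k = 2" using k by auto
  have inj: "inj_on (tab k) {0,1,2,3}" using kk by (auto simp: inj_on_def tab_def)
  have im: "tab k ` {0,1,2,3} = {0,1,2,3}" using kk by (auto simp: tab_def)
  have "map_pmf (tab k) (pmf_of_set {0,1,2,3}) = pmf_of_set (tab k ` {0,1,2,3})"
    by (rule map_pmf_of_set_inj[OF inj]) auto
  then show ?thesis unfolding q pF0_def im .
qed


locale ach = fixes L :: nat and TY :: "'a::{finite,field} itself"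

sublocale ach \<subseteq> sp L pF0 "pR0 L :: 'a list pmf" TY
  by unfold_locales (simp_all add: setF0 setR0 lists_fin)

context ach
begin

abbreviation AN :: "nat \<Rightarrow> nat \<Rightarrow> (nat \<Rightarrow> nat \<Rightarrow> 'a) \<times> nat \<times> 'a list \<Rightarrow> 'a list" where
  "AN n k \<omega> \<equiv> answer qry0 (ans0 L) n k \<omega>"

lemma inS: "\<omega> \<in> set_pmf MM \<Longrightarrow> fst \<omega> \<in> msgs 3 L \<and> fst (snd \<omega>) \<in> {0,1,2,3} \<and> length (snd (snd \<omega>)) = L"
  by (auto simp: setM setF0 setR0)

lemma AN_nth: "l < L \<Longrightarrow> AN n k \<omega> ! l = (\<Sum>j\<in>SS n (qry0 n k (fst (snd \<omega>))). fst \<omega> j l) + snd (snd \<omega>) ! l"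
  by (simp add: answer_def query_def ans0_def)

lemma AN_len: "length (AN n k \<omega>) = L"
  by (simp add: answer_def query_def ans0_def)

lemma sg_sq: "sg k f * sg k f = (1::'a)"
  by (simp add: sg_def)

lemma W_undef: "W \<in> msgs 3 L \<Longrightarrow> k < 3 \<Longrightarrow> \<not> l < L \<Longrightarrow> W k l = undefined"
  unfolding msgs_def by (auto dest!: PiE_mem[where x = k] simp: PiE_def extensional_def)

lemma decode:
  assumes w: "\<omega> \<in> set_pmf MM" and k: "k < 3"
  shows "fst \<omega> k = (\<lambda>l. if l < L then sg k (fst (snd \<omega>)) * (AN 1 k \<omega> ! l - AN 0 k \<omega> ! l) else undefined)"
proof
  fix l
  show "fst \<omega> k l = (if l < L then sg k (fst (snd \<omega>)) * (AN 1 k \<omega> ! l - AN 0 k \<omega> ! l) else undefined)"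
  proof (cases "l < L")
    case True
    have f: "fst (snd \<omega>) \<in> {0,1,2,3}" using inS[OF w] by simp
    have "AN 1 k \<omega> ! l - AN 0 k \<omega> ! l = sg k (fst (snd \<omega>)) * fst \<omega> k l"
      using True ident[OF k f, of "fst \<omega>" l] by (simp add: AN_nth)
    then have "sg k (fst (snd \<omega>)) * (AN 1 k \<omega> ! l - AN 0 k \<omega> ! l) = fst \<omega> k l"
      by (simp add: mult.assoc[symmetric] sg_sq)
    then show ?thesis using True by simp
  next
    case False then show ?thesis using W_undef[of "fst \<omega>" k l] inS[OF w] k by simp
  qed
qed

lemma recode:
  assumes w: "\<omega> \<in> set_pmf MM" and k: "k < 3"
  shows "AN 1 k \<omega> = map (\<lambda>l. AN 0 k \<omega> ! l + sg k (fst (snd \<omega>)) * fst \<omega> k l) [0..<L]"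
proof (rule nth_equalityI)
  show "length (AN 1 k \<omega>) = length (map (\<lambda>l. AN 0 k \<omega> ! l + sg k (fst (snd \<omega>)) * fst \<omega> k l) [0..<L])"
    by (simp add: AN_len)
  fix l assume "l < length (AN 1 k \<omega>)"
  then have l: "l < L" by (simp add: AN_len)
  have f: "fst (snd \<omega>) \<in> {0,1,2,3}" using inS[OF w] by simp
  show "AN 1 k \<omega> ! l = map (\<lambda>l. AN 0 k \<omega> ! l + sg k (fst (snd \<omega>)) * fst \<omega> k l) [0..<L] ! l"
    using l ident[OF k f, of "fst \<omega>" l] by (simp add: AN_nth algebra_simps)
qed

lemma Rrec:
  assumes w: "\<omega> \<in> set_pmf MM"
  shows "snd (snd \<omega>) = map (\<lambda>l. AN 0 k \<omega> ! l - (\<Sum>j\<in>SS 0 (qry0 0 k (fst (snd \<omega>))). fst \<omega> j l)) [0..<L]"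
proof (rule nth_equalityI)
  show "length (snd (snd \<omega>)) = length (map (\<lambda>l. AN 0 k \<omega> ! l - (\<Sum>j\<in>SS 0 (qry0 0 k (fst (snd \<omega>))). fst \<omega> j l)) [0..<L])"
    using inS[OF w] by simp
  fix l assume "l < length (snd (snd \<omega>))"
  then have l: "l < L" using inS[OF w] by simp
  then show "snd (snd \<omega>) ! l = map (\<lambda>l. AN 0 k \<omega> ! l - (\<Sum>j\<in>SS 0 (qry0 0 k (fst (snd \<omega>))). fst \<omega> j l)) [0..<L] ! l"
    by (simp add: AN_nth)
qed

end


context sp
begin

lemma HR: "H (\<lambda>\<omega>. snd (snd \<omega>)) = pmf_entropy (real CARD('a)) pR"
proof -
  have "map_pmf (\<lambda>\<omega>. snd (snd \<omega>)) MM = map_pmf snd (map_pmf snd MM)" by (simp add: map_pmf_comp)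
  also have "\<dots> = pR" by (simp add: spir_space_def map_snd_pair_pmf)
  finally show ?thesis by (simp add: ent_def)
qed

lemma WR_pair: "H (\<lambda>\<omega>. (fst \<omega>, snd (snd \<omega>))) = H (\<lambda>\<omega>. fst \<omega>) + H (\<lambda>\<omega>. snd (snd \<omega>))"
proof -
  let ?g = "\<lambda>\<omega>::((nat \<Rightarrow> nat \<Rightarrow> 'a) \<times> 'f \<times> 'r). (fst (snd \<omega>), (fst \<omega>, snd (snd \<omega>)))"
  have m: "map_pmf ?g MM = pair_pmf pF (pair_pmf pW pR)" by (rule spir_indep)
  have "map_pmf (\<lambda>\<omega>. (fst \<omega>, snd (snd \<omega>))) MM = map_pmf snd (map_pmf ?g MM)" by (simp add: map_pmf_comp)
  also have "\<dots> = pair_pmf pW pR" by (simp add: m map_snd_pair_pmf)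
  finally have "H (\<lambda>\<omega>. (fst \<omega>, snd (snd \<omega>))) = pmf_entropy (real CARD('a)) (pair_pmf pW pR)" by (simp add: ent_def)
  also have "\<dots> = pmf_entropy (real CARD('a)) pW + pmf_entropy (real CARD('a)) pR"
    by (rule pmf_entropy_pair) (simp_all add: finR msgs_fin msgs_ne)
  also have "pmf_entropy (real CARD('a)) pW = H (\<lambda>\<omega>. fst \<omega>)"
    by (simp add: ent_def spir_space_def map_fst_pair_pmf)
  finally show ?thesis by (simp add: HR)
qed

end

context ach
begin

lemma HR0: "H (\<lambda>\<omega>. snd (snd \<omega>)) = real L"
proof -
  have "H (\<lambda>\<omega>. snd (snd \<omega>)) = pmf_entropy (real CARD('a)) (pR0 L :: 'a list pmf)" by (rule HR)
  also have "\<dots> = log (real CARD('a)) (real (card {xs :: 'a list. length xs = L}))"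
    unfolding pR0_def by (rule pmf_entropy_uniform[OF lists_fin lists_ne])
  also have "\<dots> = real L" using b by (simp add: lists_card log_nat_power)
  finally show ?thesis .
qed

lemma rel_ok:
  assumes k: "k < 3"
  shows "cond_ent (real CARD('a)) MM (\<lambda>\<omega>. fst \<omega> k) (\<lambda>\<omega>. (fst (snd \<omega>), answers 2 qry0 (ans0 L) k \<omega>)) = 0"
proof -
  have "H (\<lambda>\<omega>. (fst \<omega> k, (fst (snd \<omega>), answers 2 qry0 (ans0 L) k \<omega>))) = H (\<lambda>\<omega>. (fst (snd \<omega>), answers 2 qry0 (ans0 L) k \<omega>))"
  proof (rule Heq)
    fix \<omega> \<omega>' assume w: "\<omega> \<in> set_pmf MM" and w': "\<omega>' \<in> set_pmf MM"
    show "((fst (snd \<omega>'), answers 2 qry0 (ans0 L) k \<omega>') = (fst (snd \<omega>), answers 2 qry0 (ans0 L) k \<omega>)) =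
          ((fst \<omega>' k, fst (snd \<omega>'), answers 2 qry0 (ans0 L) k \<omega>') = (fst \<omega> k, fst (snd \<omega>), answers 2 qry0 (ans0 L) k \<omega>))"
      using decode[OF w k] decode[OF w' k] by (auto simp: answers2)
  qed
  then show ?thesis by (simp add: cond_ent_def)
qed

lemma upriv_gen:
  assumes k: "k < 3"
  shows "map_pmf (\<lambda>\<omega>. (query qry0 n k \<omega>, AN n k \<omega>, fst \<omega>, snd (snd \<omega>))) MM
       = map_pmf (\<lambda>(w, q, r). (q, ans0 L n q w r, w, r)) (pair_pmf pW (pair_pmf pF0 (pR0 L)))"
proof -
  have e: "(\<lambda>\<omega>. (query qry0 n k \<omega>, AN n k \<omega>, fst \<omega>, snd (snd \<omega>)))
     = (\<lambda>(w, q, r). (q, ans0 L n q w r, w, r)) \<circ> (\<lambda>(w, f, r). (w, qry0 n k f, r))"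
    by (auto simp: answer_def query_def fun_eq_iff)
  show ?thesis unfolding e pmf.map_comp[symmetric]
    by (simp add: spir_space_def map_mid qry_pres[OF k])
qed

lemma dpriv_ok:
  assumes k: "k < 3"
  shows "mutual_info (real CARD('a)) MM (\<lambda>\<omega>. other_msgs 3 k (fst \<omega>))
                 (\<lambda>\<omega>. (fst (snd \<omega>), answers 2 qry0 (ans0 L) k \<omega>)) = 0"
proof -
  let ?Wb = "\<lambda>\<omega>::((nat \<Rightarrow> nat \<Rightarrow> 'a) \<times> nat \<times> 'a list). other_msgs 3 k (fst \<omega>)"
  let ?FA = "\<lambda>\<omega>::((nat \<Rightarrow> nat \<Rightarrow> 'a) \<times> nat \<times> 'a list). (fst (snd \<omega>), answers 2 qry0 (ans0 L) k \<omega>)"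
  let ?F = "\<lambda>\<omega>::((nat \<Rightarrow> nat \<Rightarrow> 'a) \<times> nat \<times> 'a list). fst (snd \<omega>)"
  have i: "H (\<lambda>\<omega>. (?Wb \<omega>, ?FA \<omega>)) \<le> H ?Wb + H ?FA" by (rule subadd)
  have ii: "H (\<lambda>\<omega>. (?Wb \<omega>, ?FA \<omega>)) = H (\<lambda>\<omega>. (fst (snd \<omega>), (fst \<omega>, snd (snd \<omega>))))"
  proof (rule Heq)
    fix \<omega> \<omega>' assume w: "\<omega> \<in> set_pmf MM" and w': "\<omega>' \<in> set_pmf MM"
    show "((fst (snd \<omega>'), fst \<omega>', snd (snd \<omega>')) = (fst (snd \<omega>), fst \<omega>, snd (snd \<omega>))) =
          ((?Wb \<omega>', ?FA \<omega>') = (?Wb \<omega>, ?FA \<omega>))"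
    proof
      assume h: "(?Wb \<omega>', ?FA \<omega>') = (?Wb \<omega>, ?FA \<omega>)"
      then have a0: "AN 0 k \<omega>' = AN 0 k \<omega>" and a1: "AN 1 k \<omega>' = AN 1 k \<omega>"
        and f: "fst (snd \<omega>') = fst (snd \<omega>)" and o: "?Wb \<omega>' = ?Wb \<omega>" unfolding answers2 by auto
      have wk: "fst \<omega>' k = fst \<omega> k" unfolding decode[OF w k] decode[OF w' k] a0 a1 f by (rule refl)
      have W: "fst \<omega>' = fst \<omega>" using other_eq[OF k _ _ o wk] inS[OF w] inS[OF w'] by blast
      have R: "snd (snd \<omega>') = snd (snd \<omega>)" using Rrec[OF w, of k] Rrec[OF w', of k] a0 f W by simp
      show "(fst (snd \<omega>'), fst \<omega>', snd (snd \<omega>')) = (fst (snd \<omega>), fst \<omega>, snd (snd \<omega>))" using f W R by simp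
    next
      assume "(fst (snd \<omega>'), fst \<omega>', snd (snd \<omega>')) = (fst (snd \<omega>), fst \<omega>, snd (snd \<omega>))"
      then have "\<omega>' = \<omega>" by (simp add: prod_eq_iff)
      then show "(?Wb \<omega>', ?FA \<omega>') = (?Wb \<omega>, ?FA \<omega>)" by simp
    qed
  qed
  have iii: "H ?FA = H (\<lambda>\<omega>. (?F \<omega>, (AN 0 k \<omega>, fst \<omega> k)))"
  proof (rule Heq)
    fix \<omega> \<omega>' assume w: "\<omega> \<in> set_pmf MM" and w': "\<omega>' \<in> set_pmf MM"
    show "((?F \<omega>', AN 0 k \<omega>', fst \<omega>' k) = (?F \<omega>, AN 0 k \<omega>, fst \<omega> k)) = (?FA \<omega>' = ?FA \<omega>)"
    proof
      assume h: "(?F \<omega>', AN 0 k \<omega>', fst \<omega>' k) = (?F \<omega>, AN 0 k \<omega>, fst \<omega> k)"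
      then have f: "?F \<omega>' = ?F \<omega>" and a0: "AN 0 k \<omega>' = AN 0 k \<omega>" and wk: "fst \<omega>' k = fst \<omega> k" by auto
      have a1: "AN 1 k \<omega>' = AN 1 k \<omega>"
        unfolding recode[OF w k] recode[OF w' k] a0 f wk by (rule refl)
      show "?FA \<omega>' = ?FA \<omega>" unfolding answers2 using f a0 a1 by simp
    next
      assume h: "?FA \<omega>' = ?FA \<omega>"
      then have a0: "AN 0 k \<omega>' = AN 0 k \<omega>" and a1: "AN 1 k \<omega>' = AN 1 k \<omega>"
        and f: "fst (snd \<omega>') = fst (snd \<omega>)" unfolding answers2 by auto
      have wk: "fst \<omega>' k = fst \<omega> k" unfolding decode[OF w k] decode[OF w' k] a0 a1 f by (rule refl)
      show "(?F \<omega>', AN 0 k \<omega>', fst \<omega>' k) = (?F \<omega>, AN 0 k \<omega>, fst \<omega> k)" using f a0 wk by simp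
    qed
  qed
  have iii2: "H (\<lambda>\<omega>. (?F \<omega>, (AN 0 k \<omega>, fst \<omega> k))) \<le> H ?F + H (\<lambda>\<omega>. (AN 0 k \<omega>, fst \<omega> k))" by (rule subadd)
  have iii3: "H (\<lambda>\<omega>. (AN 0 k \<omega>, fst \<omega> k)) \<le> H (AN 0 k) + H (\<lambda>\<omega>. fst \<omega> k)" by (rule subadd)
  have iii4: "H (\<lambda>\<omega>. fst \<omega> k) \<le> real L" by (rule HWj[OF k])
  have iii5: "H (AN 0 k) \<le> real L"
  proof -
    have "H (AN 0 k) \<le> log (real CARD('a)) (real (card (AN 0 k ` set_pmf MM)))" by (rule ent_le_card[OF fin b])
    also have "\<dots> \<le> log (real CARD('a)) (real (card {xs :: 'a list. length xs = L}))"
    proof -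
      have sub: "AN 0 k ` set_pmf MM \<subseteq> {xs. length xs = L}" by (auto simp: AN_len)
      have "card (AN 0 k ` set_pmf MM) \<le> card {xs :: 'a list. length xs = L}" by (rule card_mono[OF lists_fin sub])
      moreover have "0 < card (AN 0 k ` set_pmf MM)" using fin by (simp add: card_gt_0_iff set_pmf_not_empty)
      ultimately show ?thesis using b by simp
    qed
    also have "\<dots> = real L" using b by (simp add: lists_card log_nat_power)
    finally show ?thesis .
  qed
  have iv: "H ?Wb \<le> 2 * real L"
  proof -
    let ?P = "Pi\<^sub>E {..<L} (\<lambda>_. (UNIV :: 'a set))"
    have "H ?Wb \<le> log (real CARD('a)) (real (card (?Wb ` set_pmf MM)))" by (rule ent_le_card[OF fin b])
    also have "\<dots> \<le> log (real CARD('a)) (real (card {xs. set xs \<subseteq> ?P \<and> length xs = 2}))"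
    proof -
      have len: "length (other_msgs 3 k W) = 2" for W :: "nat \<Rightarrow> nat \<Rightarrow> 'a"
      proof -
        have "k = 0 \<or> k = 1 \<or> k = 2" using k by auto
        then show ?thesis
        proof (elim disjE)
          assume kk: "k = 0" show ?thesis unfolding kk oth0 by simp
        next
          assume kk: "k = 1" show ?thesis unfolding kk oth1 by simp
        next
          assume kk: "k = 2" show ?thesis unfolding kk other2 by simp
        qed
      qed
      have sub: "?Wb ` set_pmf MM \<subseteq> {xs. set xs \<subseteq> ?P \<and> length xs = 2}"
      proof (rule image_subsetI)
        fix \<omega> assume w: "\<omega> \<in> set_pmf MM"
        have "set (other_msgs 3 k (fst \<omega>)) \<subseteq> ?P"
        proof
          fix x assume "x \<in> set (other_msgs 3 k (fst \<omega>))"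
          then obtain j where j: "j < 3" and x: "x = fst \<omega> j" by (auto simp: other_msgs_def)
          show "x \<in> ?P" using inS[OF w] j unfolding x msgs_def by (auto dest: PiE_mem)
        qed
        then show "?Wb \<omega> \<in> {xs. set xs \<subseteq> ?P \<and> length xs = 2}" by (simp add: len)
      qed
      have finP: "finite ?P" by (simp add: finite_PiE)
      have "card (?Wb ` set_pmf MM) \<le> card {xs. set xs \<subseteq> ?P \<and> length xs = 2}"
        by (rule card_mono[OF finite_lists_length_eq[OF finP] sub])
      moreover have "0 < card (?Wb ` set_pmf MM)" using fin by (simp add: card_gt_0_iff set_pmf_not_empty)
      ultimately show ?thesis using b by simp
    qed
    also have "\<dots> = 2 * real L"
      using b by (simp add: card_lists_length_eq[OF finite_PiE] inner_card log_nat_power flip: power_mult)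
    finally show ?thesis .
  qed
  have v: "H (\<lambda>\<omega>. (fst (snd \<omega>), (fst \<omega>, snd (snd \<omega>)))) = H ?F + 3 * real L + real L"
    using indep WR_pair HW HR0 by simp
  show ?thesis unfolding mutual_info_def
    using i ii iii iii2 iii3 iii4 iii5 iv v by linarith
qed

end


lemma log2_4: "log 2 (4::real) = 2"
proof -
  have "log 2 ((2::real) ^ 2) = real 2 * log 2 2" by (rule log_nat_power) simp
  then show ?thesis by simp
qed

lemma qset: "n < 2 \<Longrightarrow> {qry0 n k f |k f. k < 3 \<and> f \<in> set_pmf pF0} = {0,1,2,3}"
proof
  assume n: "n < 2"
  show "{qry0 n k f |k f. k < 3 \<and> f \<in> set_pmf pF0} \<subseteq> {0,1,2,3}"
  proof
    fix x assume "x \<in> {qry0 n k f |k f. k < 3 \<and> f \<in> set_pmf pF0}"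
    then obtain k f where k: "k < 3" and f: "f \<in> {0,1,2,3}" and x: "x = qry0 n k f" by (auto simp: setF0)
    have "k = 0 \<or> k = 1 \<or> k = 2" using k by auto
    then show "x \<in> {0,1,2,3}" using f unfolding x by (auto simp: qry0_def tab_def)
  qed
  show "{0,1,2,3} \<subseteq> {qry0 n k f |k f. k < 3 \<and> f \<in> set_pmf pF0}"
  proof
    fix x :: nat assume x: "x \<in> {0,1,2,3}"
    have "qry0 n 0 x = x" using x by (auto simp: qry0_def tab_def)
    then show "x \<in> {qry0 n k f |k f. k < 3 \<and> f \<in> set_pmf pF0}"
      using x by (intro CollectI exI[of _ 0] exI[of _ x]) (auto simp: setF0)
  qed
qed

lemma upload_ok: "upload_cost 2 3 pF0 qry0 = 4"
  unfolding upload_cost_def using qset[of 0] qset[of 1] by (simp add: numeral_2_eq_2 log2_4)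

context ach
begin

lemma dset:
  assumes n: "n < 2"
  shows "{answer qry0 (ans0 L) n k \<omega> | k \<omega>. k < 3 \<and> \<omega> \<in> set_pmf MM} = {xs. length xs = L}"
proof
  show "{answer qry0 (ans0 L) n k \<omega> | k \<omega>. k < 3 \<and> \<omega> \<in> set_pmf MM} \<subseteq> {xs. length xs = L}"
    by (auto simp: AN_len)
  show "{xs. length xs = L} \<subseteq> {answer qry0 (ans0 L) n k \<omega> | k \<omega>. k < 3 \<and> \<omega> \<in> set_pmf MM}"
  proof
    fix xs :: "'a list" assume xs: "xs \<in> {xs. length xs = L}"
    obtain W where W: "W \<in> (msgs 3 L :: (nat \<Rightarrow> nat \<Rightarrow> 'a) set)" using msgs_ne by blast
    define R where "R = map (\<lambda>l. xs ! l - (\<Sum>j\<in>SS n (qry0 n 0 0). W j l)) [0..<L]"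
    define \<omega> where "\<omega> = (W, 0::nat, R)"
    have w: "\<omega> \<in> set_pmf MM" using W by (simp add: \<omega>_def setM setF0 setR0 R_def)
    have e: "AN n 0 \<omega> = xs"
    proof (rule nth_equalityI)
      show "length (AN n 0 \<omega>) = length xs" using xs by (simp add: AN_len)
      fix l assume "l < length (AN n 0 \<omega>)"
      then have l: "l < L" by (simp add: AN_len)
      then show "AN n 0 \<omega> ! l = xs ! l" by (simp add: AN_nth \<omega>_def R_def)
    qed
    show "xs \<in> {answer qry0 (ans0 L) n k \<omega> | k \<omega>. k < 3 \<and> \<omega> \<in> set_pmf MM}"
      by (rule CollectI, rule exI[of _ 0], rule exI[of _ \<omega>]) (simp add: w e)
  qed
qed

lemma download_ok: "download_cost 2 3 L pF0 (pR0 L :: 'a list pmf) qry0 (ans0 L) = 2 * real L"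
proof -
  have t: "log (real CARD('a)) (real (card {answer qry0 (ans0 L) n k \<omega> | k \<omega>. k < 3 \<and> \<omega> \<in> set_pmf MM})) = real L"
    if n: "n < 2" for n
    unfolding dset[OF n] using b by (simp add: lists_card log_nat_power)
  show ?thesis unfolding download_cost_def using t[of 0] t[of 1] by (simp add: numeral_2_eq_2)
qed

lemma scheme_ok: "spir_scheme 2 3 L pF0 (pR0 L :: 'a list pmf) qry0 (ans0 L)"
  unfolding spir_scheme_def Let_def
proof (intro conjI allI impI)
  show "finite (set_pmf pF0)" by (rule finF)
  show "finite (set_pmf (pR0 L :: 'a list pmf))" by (rule finR)
  fix k :: nat assume k: "k < 3"
  show "cond_ent (real CARD('a)) MM (\<lambda>\<omega>. fst \<omega> k) (\<lambda>\<omega>. (fst (snd \<omega>), answers 2 qry0 (ans0 L) k \<omega>)) = 0"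
    by (rule rel_ok[OF k])
  show "mutual_info (real CARD('a)) MM (\<lambda>\<omega>. other_msgs 3 k (fst \<omega>))
                 (\<lambda>\<omega>. (fst (snd \<omega>), answers 2 qry0 (ans0 L) k \<omega>)) = 0"
    by (rule dpriv_ok[OF k])
next
  fix n k k' :: nat assume "n < 2" and k: "k < 3" and k': "k' < 3"
  show "map_pmf (\<lambda>\<omega>. (query qry0 n k \<omega>, answer qry0 (ans0 L) n k \<omega>, fst \<omega>, snd (snd \<omega>))) MM =
        map_pmf (\<lambda>\<omega>. (query qry0 n k' \<omega>, answer qry0 (ans0 L) n k' \<omega>, fst \<omega>, snd (snd \<omega>))) MM"
    unfolding upriv_gen[OF k] upriv_gen[OF k'] ..
qed

lemma ach_main: "spir_scheme 2 3 L pF0 (pR0 L :: 'a list pmf) qry0 (ans0 L) \<and> upload_cost 2 3 pF0 qry0 = 4 \<and>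
   download_cost 2 3 L pF0 (pR0 L :: 'a list pmf) qry0 (ans0 L) = 2 * real L \<and>
   pmf_entropy (real CARD('a)) (pR0 L :: 'a list pmf) = real L"
  using scheme_ok upload_ok download_ok HR0 HR by simp

end

theorem theorem3:
  fixes L :: nat
  shows "(\<forall>(pF :: 'f pmf) (pR :: 'r pmf) (qry :: nat \<Rightarrow> nat \<Rightarrow> 'f \<Rightarrow> 'q)
            (ans :: nat \<Rightarrow> 'q \<Rightarrow> (nat \<Rightarrow> nat \<Rightarrow> 'a::{finite,field}) \<Rightarrow> 'r \<Rightarrow> 'b).
            spir_scheme 2 3 L pF pR qry ans \<and> upload_cost 2 3 pF qry = 4 \<longrightarrow>
            download_cost 2 3 L pF pR qry ans \<ge> 2 * real L \<and>
            pmf_entropy (real CARD('a)) pR \<ge> real L)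
       \<and> (\<exists>(pF :: nat pmf) (pR :: 'a list pmf) (qry :: nat \<Rightarrow> nat \<Rightarrow> nat \<Rightarrow> nat)
            (ans :: nat \<Rightarrow> nat \<Rightarrow> (nat \<Rightarrow> nat \<Rightarrow> 'a) \<Rightarrow> 'a list \<Rightarrow> 'a list).
            spir_scheme 2 3 L pF pR qry ans \<and> upload_cost 2 3 pF qry = 4 \<and>
            download_cost 2 3 L pF pR qry ans = 2 * real L \<and>
            pmf_entropy (real CARD('a)) pR = real L)"
proof (intro conjI)
  show "\<forall>(pF :: 'f pmf) (pR :: 'r pmf) (qry :: nat \<Rightarrow> nat \<Rightarrow> 'f \<Rightarrow> 'q)
            (ans :: nat \<Rightarrow> 'q \<Rightarrow> (nat \<Rightarrow> nat \<Rightarrow> 'a::{finite,field}) \<Rightarrow> 'r \<Rightarrow> 'b).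
            spir_scheme 2 3 L pF pR qry ans \<and> upload_cost 2 3 pF qry = 4 \<longrightarrow>
            download_cost 2 3 L pF pR qry ans \<ge> 2 * real L \<and>
            pmf_entropy (real CARD('a)) pR \<ge> real L"
    using converse by blast
  interpret ach L "TYPE('a)" .
  show "\<exists>(pF :: nat pmf) (pR :: 'a list pmf) (qry :: nat \<Rightarrow> nat \<Rightarrow> nat \<Rightarrow> nat)
            (ans :: nat \<Rightarrow> nat \<Rightarrow> (nat \<Rightarrow> nat \<Rightarrow> 'a) \<Rightarrow> 'a list \<Rightarrow> 'a list).
            spir_scheme 2 3 L pF pR qry ans \<and> upload_cost 2 3 pF qry = 4 \<and>
            download_cost 2 3 L pF pR qry ans = 2 * real L \<and>
            pmf_entropy (real CARD('a)) pR = real L"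
    using ach_main by blast
qed


end
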